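(* Let $q\in\mathbb{C}\setminus\{0\}$ and assume $q^{2j}\neq1$ for $2\le j\le n$. Then the idempotents $p_{(n)}$ and $p_{(1^n)}$ of the Hecke algebra $H_n\subset G_n[0]$ are minimal idempotents of $G_n[0]$, i.e. $p\,G_n[0]\,p=\mathbb{C}p$ for $p\in\{p_{(n)},p_{(1^n)}\}$.
   Context: For $q\in\mathbb{C}\setminus\{0\}$ the Hecke–Clifford algebra $G_n$ is the complex algebra generated by $t_1,\dots,t_{n-1}$ and $v_1,\dots,v_n$ subject to: braid relations $t_jt_{j+1}t_j=t_{j+1}t_jt_{j+1}$, $t_it_j=t_jt_i$ ($|i-j|\ge2$); $t_j-t_j^{-1}=q-q^{-1}$; $v_jv_k+v_kv_j=2\delta_{jk}$; $t_jv_j=v_{j+1}t_j$, $t_jv_{j+1}=v_jt_j-(q-q^{-1})(v_j-v_{j+1})$, $t_jv_l=v_lt_j$ for $l\neq j,j+1$. $G_n[0]$ is the subalgebra fixed by the automorphism $v_j\mapsto -v_j$, $t_j\mapsto t_j$. $H_n\subset G_n[0]$ is the subalgebra generated by the $t_j$ (the Hecke algebra of type $A_{n-1}$). Under the assumption $q^{2j}\neq 1$ for $2\le j\le n$, $H_n$ has minimal central idempotents $p_{(n)}$ and $p_{(1^n)}$ characterized by $t_jp_{(n)}=qp_{(n)}$ and $t_jp_{(1^n)}=-q^{-1}p_{(1^n)}$ for all $1\le j<n$. *)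

theory Defs
  imports Complex_Main
begin

text \<open>A complex algebra: a unital ring 'a together with a unital ring homomorphism
  sc from the complex numbers into the centre of 'a (scalar multiplication is
  c x = sc c * x).\<close>
definition cplx_alg :: "(complex \<Rightarrow> 'a::ring_1) \<Rightarrow> bool" where
  "cplx_alg sc \<longleftrightarrow> sc 1 = 1 \<and> (\<forall>a b. sc (a + b) = sc a + sc b)
     \<and> (\<forall>a b. sc (a * b) = sc a * sc b) \<and> (\<forall>a x. sc a * x = x * sc a)"

definition hc_rels :: "(complex \<Rightarrow> 'a::ring_1) \<Rightarrow> complex \<Rightarrow> nat \<Rightarrow> (nat \<Rightarrow> 'a) \<Rightarrow> (nat \<Rightarrow> 'a) \<Rightarrow> bool" where
  "hc_rels sc q n t v \<longleftrightarrow>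
     (\<forall>j. 1 \<le> j \<and> j + 1 < n \<longrightarrow> t j * t (j+1) * t j = t (j+1) * t j * t (j+1)) \<and>
     (\<forall>i j. 1 \<le> i \<and> i < n \<and> 1 \<le> j \<and> j < n \<and> (i + 2 \<le> j \<or> j + 2 \<le> i) \<longrightarrow> t i * t j = t j * t i) \<and>
     (\<forall>j. 1 \<le> j \<and> j < n \<longrightarrow> (\<exists>u. t j * u = 1 \<and> u * t j = 1 \<and> t j - u = sc (q - inverse q))) \<and>
     (\<forall>j k. 1 \<le> j \<and> j \<le> n \<and> 1 \<le> k \<and> k \<le> n \<longrightarrow>
         v j * v k + v k * v j = (if j = k then 2 else 0)) \<and>
     (\<forall>j. 1 \<le> j \<and> j < n \<longrightarrow> t j * v j = v (j+1) * t j) \<and>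
     (\<forall>j. 1 \<le> j \<and> j < n \<longrightarrow> t j * v (j+1) = v j * t j - sc (q - inverse q) * (v j - v (j+1))) \<and>
     (\<forall>j l. 1 \<le> j \<and> j < n \<and> 1 \<le> l \<and> l \<le> n \<and> l \<noteq> j \<and> l \<noteq> j + 1 \<longrightarrow> t j * v l = v l * t j)"

inductive_set hecke_part :: "(complex \<Rightarrow> 'a::ring_1) \<Rightarrow> nat \<Rightarrow> (nat \<Rightarrow> 'a) \<Rightarrow> 'a set"
  for sc n t where
  hp_scal: "sc c \<in> hecke_part sc n t"
| hp_gen: "1 \<le> j \<Longrightarrow> j < n \<Longrightarrow> t j \<in> hecke_part sc n t"
| hp_add: "x \<in> hecke_part sc n t \<Longrightarrow> y \<in> hecke_part sc n t \<Longrightarrow> x + y \<in> hecke_part sc n t"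
| hp_mult: "x \<in> hecke_part sc n t \<Longrightarrow> y \<in> hecke_part sc n t \<Longrightarrow> x * y \<in> hecke_part sc n t"

text \<open>The even part G_n[0]: the subalgebra generated by the t_j and the products
  v_j v_k, i.e. the span of all words with an even number of Clifford generators
  (= the fixed points of v_j \<mapsto> -v_j, t_j \<mapsto> t_j).\<close>
inductive_set even_part :: "(complex \<Rightarrow> 'a::ring_1) \<Rightarrow> nat \<Rightarrow> (nat \<Rightarrow> 'a) \<Rightarrow> (nat \<Rightarrow> 'a) \<Rightarrow> 'a set"
  for sc n t v where
  ep_scal: "sc c \<in> even_part sc n t v"
| ep_t: "1 \<le> j \<Longrightarrow> j < n \<Longrightarrow> t j \<in> even_part sc n t v"
| ep_vv: "1 \<le> j \<Longrightarrow> j \<le> n \<Longrightarrow> 1 \<le> k \<Longrightarrow> k \<le> n \<Longrightarrow> v j * v k \<in> even_part sc n t v"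
| ep_add: "x \<in> even_part sc n t v \<Longrightarrow> y \<in> even_part sc n t v \<Longrightarrow> x + y \<in> even_part sc n t v"
| ep_mult: "x \<in> even_part sc n t v \<Longrightarrow> y \<in> even_part sc n t v \<Longrightarrow> x * y \<in> even_part sc n t v"

end

theory Submission
  imports Defs
begin

locale hcl =
  fixes sc :: "complex \<Rightarrow> 'a::ring_1" and q :: complex and n :: nat and t v :: "nat \<Rightarrow> 'a"
  assumes alg: "cplx_alg sc" and rels: "hc_rels sc q n t v" and q0: "q \<noteq> 0"
    and qroot: "\<forall>j. 2 \<le> j \<and> j \<le> n \<longrightarrow> q ^ (2 * j) \<noteq> 1"
begin

lemma sc1[simp]: "sc 1 = 1" using alg unfolding cplx_alg_def by blast
lemma sc_add: "sc (a + b) = sc a + sc b" using alg unfolding cplx_alg_def by blast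
lemma sc_mult: "sc (a * b) = sc a * sc b" using alg unfolding cplx_alg_def by blast
lemma sc_comm: "sc a * x = x * sc a" using alg unfolding cplx_alg_def by blast
lemma sc0[simp]: "sc 0 = 0"
  using sc_add[of 0 0] by simp
lemma sc_minus: "sc (- a) = - sc a"
  using sc_add[of a "-a"] by (simp add: add_eq_0_iff2)
lemma sc_diff: "sc (a - b) = sc a - sc b"
  using sc_add[of a "-b"] sc_minus[of b] by simp
lemma scsc: "sc a * (sc b * x) = sc (a * b) * x"
  by (simp add: sc_mult mult.assoc)
lemma xsc: "x * (sc a * y) = sc a * (x * y)"
  by (metis mult.assoc sc_comm)
lemma sc_addx: "sc a * x + sc b * x = sc (a + b) * x"
  by (simp add: sc_add distrib_right)
lemma sc_inv: "c \<noteq> 0 \<Longrightarrow> sc (inverse c) * (sc c * x) = x"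
  by (simp add: scsc)
lemma sc2: "sc 2 = 2"
proof -
  have "sc (1 + 1) = 1 + 1" by (simp only: sc_add sc1)
  then show ?thesis by (metis one_add_one)
qed

abbreviation "\<delta> \<equiv> q - inverse q"

lemmas RR = rels[unfolded hc_rels_def]
lemmas R1 = RR[THEN conjunct1]
lemmas R2 = RR[THEN conjunct2, THEN conjunct1]
lemmas R3 = RR[THEN conjunct2, THEN conjunct2, THEN conjunct1]
lemmas R4 = RR[THEN conjunct2, THEN conjunct2, THEN conjunct2, THEN conjunct1]
lemmas R5 = RR[THEN conjunct2, THEN conjunct2, THEN conjunct2, THEN conjunct2, THEN conjunct1]
lemmas R6 = RR[THEN conjunct2, THEN conjunct2, THEN conjunct2, THEN conjunct2, THEN conjunct2, THEN conjunct1]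
lemmas R7 = RR[THEN conjunct2, THEN conjunct2, THEN conjunct2, THEN conjunct2, THEN conjunct2, THEN conjunct2]

lemma braid: "1 \<le> j \<Longrightarrow> j + 1 < n \<Longrightarrow> t j * t (j+1) * t j = t (j+1) * t j * t (j+1)"
  using R1 by blast
lemma tcomm: "1 \<le> i \<Longrightarrow> i < n \<Longrightarrow> 1 \<le> j \<Longrightarrow> j < n \<Longrightarrow> i + 2 \<le> j \<or> j + 2 \<le> i \<Longrightarrow> t i * t j = t j * t i"
  using R2 by blast
lemma tsq: "1 \<le> j \<Longrightarrow> j < n \<Longrightarrow> t j * t j = sc \<delta> * t j + 1"
proof -
  assume "1 \<le> j" "j < n"
  then obtain u where u: "t j * u = 1" "u * t j = 1" "t j - u = sc \<delta>"
    using R3 by blast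
  have "u = t j - sc \<delta>" using u(3) by (simp add: algebra_simps)
  then have "t j * (t j - sc \<delta>) = 1" using u(1) by simp
  then have "t j * t j - t j * sc \<delta> = 1" by (simp add: right_diff_distrib)
  then have "t j * t j - sc \<delta> * t j = 1" by (simp only: sc_comm[symmetric])
  then show ?thesis by (metis diff_eq_eq add.commute)
qed
lemma vv: "1 \<le> j \<Longrightarrow> j \<le> n \<Longrightarrow> 1 \<le> k \<Longrightarrow> k \<le> n \<Longrightarrow> v j * v k + v k * v j = (if j = k then 2 else 0)"
  using R4 by blast
lemma tv1: "1 \<le> j \<Longrightarrow> j < n \<Longrightarrow> t j * v j = v (j+1) * t j"
  using R5 by blast
lemma tv2: "1 \<le> j \<Longrightarrow> j < n \<Longrightarrow> t j * v (j+1) = v j * t j - sc \<delta> * (v j - v (j+1))"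
  using R6 by blast
lemma tv3: "1 \<le> j \<Longrightarrow> j < n \<Longrightarrow> 1 \<le> l \<Longrightarrow> l \<le> n \<Longrightarrow> l \<noteq> j \<Longrightarrow> l \<noteq> j + 1 \<Longrightarrow> t j * v l = v l * t j"
  using R7 by blast

lemma vsq: "1 \<le> j \<Longrightarrow> j \<le> n \<Longrightarrow> v j * v j = 1"
proof -
  assume a: "1 \<le> j" "j \<le> n"
  have "v j * v j + v j * v j = 2" using vv[OF a a] by simp
  then have "sc 2 * (v j * v j) = sc 2 * 1" by (simp add: sc2 mult_2)
  then have "sc (inverse 2) * (sc 2 * (v j * v j)) = sc (inverse 2) * (sc 2 * 1)" by simp
  then show ?thesis using sc_inv[of 2 "v j * v j"] sc_inv[of 2 1] by simp
qed
lemma vanti: "1 \<le> j \<Longrightarrow> j \<le> n \<Longrightarrow> 1 \<le> k \<Longrightarrow> k \<le> n \<Longrightarrow> j \<noteq> k \<Longrightarrow> v j * v k = - (v k * v j)"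
  using vv[of j k] by (simp add: eq_neg_iff_add_eq_0)


fun Rw :: "nat \<Rightarrow> nat \<Rightarrow> 'a" where
  "Rw k 0 = 1"
| "Rw k (Suc i) = Rw k i * t (k - i)"

lemma L1: "1 \<le> j \<Longrightarrow> i + j < k \<Longrightarrow> k < n \<Longrightarrow> Rw k i * t j = t j * Rw k i"
proof (induction i)
  case 0 then show ?case by simp
next
  case (Suc i)
  have c: "t (k - i) * t j = t j * t (k - i)"
    using Suc.prems by (intro tcomm) auto
  have "Rw k (Suc i) * t j = Rw k i * (t (k - i) * t j)" by (simp add: mult.assoc)
  also have "\<dots> = (Rw k i * t j) * t (k - i)" by (simp add: c mult.assoc)
  also have "\<dots> = t j * Rw k (Suc i)" using Suc by (simp add: mult.assoc)
  finally show ?case .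
qed

lemma L3: "1 \<le> i \<Longrightarrow> i + j = k + 1 \<Longrightarrow> 1 \<le> j \<Longrightarrow> k < n \<Longrightarrow>
    Rw k i * t j = sc \<delta> * Rw k i + Rw k (i - 1)"
proof -
  assume a: "1 \<le> i" "i + j = k + 1" "1 \<le> j" "k < n"
  then obtain i0 where i0: "i = Suc i0" by (cases i) auto
  have kj: "k - i0 = j" using a i0 by simp
  have "Rw k i * t j = Rw k i0 * (t j * t j)" using i0 kj by (simp add: mult.assoc)
  also have "\<dots> = Rw k i0 * (sc \<delta> * t j + 1)" using a by (simp add: tsq)
  also have "\<dots> = sc \<delta> * (Rw k i0 * t j) + Rw k i0" by (simp add: distrib_left xsc)
  finally show ?thesis using i0 kj by simp
qed

lemma L4: "1 \<le> j \<Longrightarrow> j \<le> k \<Longrightarrow> i \<le> k \<Longrightarrow> k + 2 \<le> i + j \<Longrightarrow> k < n \<Longrightarrow>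
    Rw k i * t j = t (j - 1) * Rw k i"
proof (induction i)
  case 0 then show ?case by simp
next
  case (Suc i)
  show ?case
  proof (cases "i + j = k + 1")
    case True
    then obtain i0 where i0: "i = Suc i0" using Suc.prems by (cases i) auto
    have kj: "k - i0 = j" "k - i = j - 1" using True i0 by auto
    have j2: "2 \<le> j" using Suc.prems True by auto
    have br: "t (j-1) * t j * t (j-1) = t j * t (j-1) * t j"
      using braid[of "j-1"] j2 Suc.prems by simp
    have l1: "Rw k i0 * t (j-1) = t (j-1) * Rw k i0"
      using L1[of "j-1" i0 k] j2 True i0 Suc.prems by simp
    have "Rw k (Suc i) * t j = Rw k i0 * (t j * t (j-1) * t j)"
      using i0 kj by (simp add: mult.assoc)
    also have "\<dots> = (Rw k i0 * t (j-1)) * t j * t (j-1)" using br by (simp add: mult.assoc)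
    also have "\<dots> = t (j-1) * Rw k (Suc i)" using l1 i0 kj by (simp add: mult.assoc)
    finally show ?thesis .
  next
    case False
    then have ih: "Rw k i * t j = t (j - 1) * Rw k i" using Suc by simp
    have c: "t (k - i) * t j = t j * t (k - i)"
      using Suc.prems False by (intro tcomm) auto
    have "Rw k (Suc i) * t j = Rw k i * (t (k - i) * t j)" by (simp add: mult.assoc)
    also have "\<dots> = (Rw k i * t j) * t (k - i)" by (simp add: c mult.assoc)
    also have "\<dots> = t (j-1) * Rw k (Suc i)" using ih by (simp add: mult.assoc)
    finally show ?thesis .
  qed
qed

lemma sum_sandwich: "x * (\<Sum>i\<in>A. sc (c i) * y i) * z = (\<Sum>i\<in>A. sc (c i) * (x * (y i * z)))"
  unfolding sum_distrib_left sum_distrib_right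
  by (rule sum.cong) (simp_all add: xsc mult.assoc)

definition Rs :: "nat \<Rightarrow> 'a" where "Rs k = (\<Sum>i\<le>k. sc (q ^ i) * Rw k i)"

fun Qs :: "nat \<Rightarrow> 'a" where
  "Qs 0 = 1"
| "Qs (Suc k) = Qs k * Rs k"

lemma Qinv: "k \<le> n \<Longrightarrow> 1 \<le> j \<Longrightarrow> j < k \<Longrightarrow> Qs k * t j = sc q * Qs k"
proof (induction k arbitrary: j)
  case 0 then show ?case by simp
next
  case (Suc k)
  define f where "f i = Qs k * Rw k i" for i
  define a where "a = k - j"
  have jk: "j \<le> k" "k < n" "1 \<le> j" using Suc.prems by auto
  have lhs: "Qs (Suc k) * t j = (\<Sum>i\<le>k. sc (q ^ i) * (f i * t j))"
    using sum_sandwich[of "Qs k" "\<lambda>i. q ^ i" "Rw k" "{..k}" "t j"] by (simp add: Rs_def f_def mult.assoc)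
  have rhs: "sc q * Qs (Suc k) = (\<Sum>i\<le>k. sc q * (sc (q ^ i) * f i))"
    using sum_sandwich[of "Qs k" "\<lambda>i. q ^ i" "Rw k" "{..k}" 1] by (simp add: Rs_def sum_distrib_left f_def)
  define g where "g i = sc (q ^ i) * (f i * t j) - sc q * (sc (q ^ i) * f i)" for i
  have g0: "g i = 0" if "i \<le> k" "i \<noteq> a" "i \<noteq> Suc a" for i
  proof -
    have "f i * t j = sc q * f i"
    proof (cases "i < a")
      case True
      then have r: "Rw k i * t j = t j * Rw k i" using jk a_def by (intro L1) auto
      have qq: "Qs k * t j = sc q * Qs k" using Suc.IH[of j] jk Suc.prems True a_def by auto
      have "f i * t j = Qs k * (Rw k i * t j)" unfolding f_def by (simp only: mult.assoc)
      also have "\<dots> = (Qs k * t j) * Rw k i" by (simp only: r mult.assoc)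
      also have "\<dots> = sc q * f i" unfolding f_def by (simp only: qq mult.assoc)
      finally show ?thesis .
    next
      case False
      then have r: "Rw k i * t j = t (j-1) * Rw k i" using jk a_def that by (intro L4) auto
      have qq: "Qs k * t (j-1) = sc q * Qs k" using Suc.IH[of "j-1"] jk Suc.prems False a_def that by auto
      have "f i * t j = Qs k * (Rw k i * t j)" unfolding f_def by (simp only: mult.assoc)
      also have "\<dots> = (Qs k * t (j-1)) * Rw k i" by (simp only: r mult.assoc)
      also have "\<dots> = sc q * f i" unfolding f_def by (simp only: qq mult.assoc)
      finally show ?thesis .
    qed
    then have "g i = sc (q ^ i) * (sc q * f i) - sc q * (sc (q ^ i) * f i)" unfolding g_def by simp
    also have "\<dots> = 0" by (simp only: scsc mult.commute diff_self)
    finally show ?thesis .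
  qed
  have fa: "f a * t j = f (Suc a)"
  proof -
    have "k - a = j" using jk a_def by simp
    then show ?thesis unfolding f_def by (simp add: mult.assoc)
  qed
  have fa1: "f (Suc a) * t j = sc \<delta> * f (Suc a) + f a"
  proof -
    have r: "Rw k (Suc a) * t j = sc \<delta> * Rw k (Suc a) + Rw k a"
      using L3[of "Suc a" j k] jk a_def by simp
    have "f (Suc a) * t j = Qs k * (Rw k (Suc a) * t j)" unfolding f_def by (simp only: mult.assoc)
    also have "\<dots> = Qs k * (sc \<delta> * Rw k (Suc a)) + f a" unfolding f_def r by (simp only: distrib_left)
    also have "\<dots> = sc \<delta> * f (Suc a) + f a" unfolding f_def by (simp only: xsc)
    finally show ?thesis .
  qed
  have qd: "q ^ Suc a * \<delta> = q ^ Suc (Suc a) - q ^ a" using q0 by (simp add: field_simps)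
  have "(\<Sum>i\<le>k. g i) = (\<Sum>i\<in>{a, Suc a}. g i)"
    using g0 jk a_def by (intro sum.mono_neutral_right) auto
  also have "\<dots> = g a + g (Suc a)" by simp
  also have "\<dots> = 0"
  proof -
    have e1: "sc (q ^ Suc a) * (sc \<delta> * f (Suc a)) = sc (q ^ Suc (Suc a)) * f (Suc a) - sc (q ^ a) * f (Suc a)"
    proof -
      have "sc (q ^ Suc a) * (sc \<delta> * f (Suc a)) = sc (q ^ Suc a * \<delta>) * f (Suc a)" by (rule scsc)
      also have "\<dots> = sc (q ^ Suc (Suc a) - q ^ a) * f (Suc a)" by (simp only: qd)
      also have "\<dots> = sc (q ^ Suc (Suc a)) * f (Suc a) - sc (q ^ a) * f (Suc a)" by (simp only: sc_diff left_diff_distrib)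
      finally show ?thesis .
    qed
    have e2: "sc q * (sc (q ^ a) * f a) = sc (q ^ Suc a) * f a"
      "sc q * (sc (q ^ Suc a) * f (Suc a)) = sc (q ^ Suc (Suc a)) * f (Suc a)"
      by (simp_all add: scsc)
    show ?thesis unfolding g_def fa fa1 e2 distrib_left e1 by (simp add: algebra_simps)
  qed
  finally have "(\<Sum>i\<le>k. g i) = 0" .
  then have "(\<Sum>i\<le>k. sc (q ^ i) * (f i * t j)) = (\<Sum>i\<le>k. sc q * (sc (q ^ i) * f i))"
    unfolding g_def by (simp add: sum_subtractf)
  then show ?case using lhs rhs by simp
qed


lemma hp_zero: "0 \<in> hecke_part sc n t"
  using hp_scal[of sc 0 n t] by simp
lemma hp_one: "1 \<in> hecke_part sc n t"
  using hp_scal[of sc 1 n t] by simp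
lemma hp_sum: "(\<And>i. i \<in> A \<Longrightarrow> f i \<in> hecke_part sc n t) \<Longrightarrow> sum f A \<in> hecke_part sc n t"
proof (induction A rule: infinite_finite_induct)
  case (infinite A) then show ?case by (simp add: hp_zero)
next
  case empty then show ?case by (simp add: hp_zero)
next
  case (insert x F) then show ?case by (simp add: hp_add)
qed

lemma Rw_hp: "i \<le> k \<Longrightarrow> k < n \<Longrightarrow> Rw k i \<in> hecke_part sc n t"
proof (induction i)
  case 0 then show ?case by (simp add: hp_one)
next
  case (Suc i)
  have "t (k - i) \<in> hecke_part sc n t" using Suc.prems by (intro hp_gen) auto
  then show ?case using Suc by (simp add: hp_mult)
qed
lemma Rs_hp: "k < n \<Longrightarrow> Rs k \<in> hecke_part sc n t"
  unfolding Rs_def by (intro hp_sum hp_mult hp_scal Rw_hp) auto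
lemma Qs_hp: "k \<le> n \<Longrightarrow> Qs k \<in> hecke_part sc n t"
proof (induction k)
  case 0 then show ?case by (simp add: hp_one)
next
  case (Suc k) then show ?case by (simp add: hp_mult Rs_hp)
qed

lemma sc_sum: "(\<Sum>i\<in>A. sc (c i) * x) = sc (\<Sum>i\<in>A. c i) * x"
proof (induction A rule: infinite_finite_induct)
  case (insert y F) then show ?case by (simp add: sc_addx)
qed auto

lemma Rw_P: "(\<forall>j. 1 \<le> j \<and> j < n \<longrightarrow> t j * P = sc q * P) \<Longrightarrow> i \<le> k \<Longrightarrow> k < n \<Longrightarrow>
   Rw k i * P = sc (q ^ i) * P"
proof (induction i)
  case 0 then show ?case by simp
next
  case (Suc i)
  have "Rw k (Suc i) * P = Rw k i * (t (k - i) * P)" by (simp add: mult.assoc)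
  also have "\<dots> = Rw k i * (sc q * P)"
  proof -
    have "1 \<le> k - i \<and> k - i < n" using Suc.prems by auto
    then have "t (k - i) * P = sc q * P" using Suc.prems(1) by blast
    then show ?thesis by simp
  qed
  also have "\<dots> = sc q * (Rw k i * P)" by (rule xsc)
  also have "\<dots> = sc q * (sc (q ^ i) * P)" using Suc by simp
  also have "\<dots> = sc (q ^ Suc i) * P" by (simp add: scsc)
  finally show ?case .
qed

definition cs :: "nat \<Rightarrow> complex" where "cs m = (\<Sum>i\<le>m. q ^ i * q ^ i)"

lemma Rs_P: "(\<forall>j. 1 \<le> j \<and> j < n \<longrightarrow> t j * P = sc q * P) \<Longrightarrow> k < n \<Longrightarrow>
   Rs k * P = sc (cs k) * P"
proof -
  assume a: "\<forall>j. 1 \<le> j \<and> j < n \<longrightarrow> t j * P = sc q * P" "k < n"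
  have "Rs k * P = (\<Sum>i\<le>k. sc (q ^ i) * (Rw k i * P))"
    unfolding Rs_def sum_distrib_right by (simp add: mult.assoc)
  also have "\<dots> = (\<Sum>i\<le>k. sc (q ^ i * q ^ i) * P)"
    using Rw_P[OF a(1) _ a(2)] by (intro sum.cong) (simp_all add: scsc)
  also have "\<dots> = sc (cs k) * P" unfolding cs_def by (rule sc_sum)
  finally show ?thesis .
qed

lemma Qs_P: "(\<forall>j. 1 \<le> j \<and> j < n \<longrightarrow> t j * P = sc q * P) \<Longrightarrow> k \<le> n \<Longrightarrow>
   Qs k * P = sc (\<Prod>m<k. cs m) * P"
proof (induction k)
  case 0 then show ?case by simp
next
  case (Suc k)
  have "Qs (Suc k) * P = Qs k * (Rs k * P)" by (simp add: mult.assoc)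
  also have "\<dots> = Qs k * (sc (cs k) * P)"
  proof -
    have "Rs k * P = sc (cs k) * P" using Rs_P[OF Suc.prems(1)] Suc.prems(2) by simp
    then show ?thesis by simp
  qed
  also have "\<dots> = sc (cs k) * (Qs k * P)" by (rule xsc)
  also have "\<dots> = sc (cs k) * (sc (\<Prod>m<k. cs m) * P)" using Suc by simp
  also have "\<dots> = sc (\<Prod>m<Suc k. cs m) * P" by (simp add: scsc mult.commute)
  finally show ?case .
qed

lemma cs_nz: "m < n \<Longrightarrow> cs m \<noteq> 0"
proof (cases m)
  case 0 then show ?thesis by (simp add: cs_def)
next
  case (Suc m')
  assume mn: "m < n"
  have q4: "q ^ (2 * 2) \<noteq> 1" using qroot Suc mn by auto
  have q2: "q ^ 2 \<noteq> 1"
  proof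
    assume "q ^ 2 = 1"
    then have "q ^ (2 * 2) = 1" by (simp only: power_mult) simp
    with q4 show False by simp
  qed
  have h: "2 \<le> Suc m \<and> Suc m \<le> n" using Suc mn by simp
  then have "q ^ (2 * Suc m) \<noteq> 1" using qroot by blast
  then have qm: "(q ^ 2) ^ Suc m \<noteq> 1" by (metis power_mult)
  have "cs m = (\<Sum>i<Suc m. (q ^ 2) ^ i)" unfolding cs_def
    by (intro sum.cong) (auto simp: power_mult_distrib[symmetric] power2_eq_square power_mult[symmetric] mult.commute)
  also have "\<dots> = ((q ^ 2) ^ Suc m - 1) / (q ^ 2 - 1)" by (rule geometric_sum[OF q2])
  finally show ?thesis using q2 qm by simp
qed

lemma Q_right: "h \<in> hecke_part sc n t \<Longrightarrow> \<exists>c. Qs n * h = sc c * Qs n"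
proof (induction rule: hecke_part.induct)
  case (hp_scal c) then show ?case by (metis sc_comm)
next
  case (hp_gen j) then show ?case using Qinv[of n j] by auto
next
  case (hp_add x y)
  then obtain a b where "Qs n * x = sc a * Qs n" "Qs n * y = sc b * Qs n" by blast
  then have "Qs n * (x + y) = sc (a + b) * Qs n" by (simp add: distrib_left sc_addx)
  then show ?case by blast
next
  case (hp_mult x y)
  then obtain a b where "Qs n * x = sc a * Qs n" "Qs n * y = sc b * Qs n" by blast
  then have "Qs n * (x * y) = sc a * (sc b * Qs n)" by (metis mult.assoc)
  then have "Qs n * (x * y) = sc (a * b) * Qs n" by (simp add: scsc)
  then show ?case by blast
qed

lemma P_right:
  assumes PH: "P \<in> hecke_part sc n t" and Pl: "\<forall>j. 1 \<le> j \<and> j < n \<longrightarrow> t j * P = sc q * P"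
  shows "\<forall>j. 1 \<le> j \<and> j < n \<longrightarrow> P * t j = sc q * P"
proof (intro allI impI)
  fix j assume j: "1 \<le> j \<and> j < n"
  define c0 where "c0 = (\<Prod>m<n. cs m)"
  have c0: "c0 \<noteq> 0" unfolding c0_def using cs_nz by simp
  have e1: "Qs n * P = sc c0 * P" unfolding c0_def using Qs_P[OF Pl] by simp
  obtain d where e2: "Qs n * P = sc d * Qs n" using Q_right[OF PH] by blast
  have Pe: "P = sc (inverse c0 * d) * Qs n"
  proof -
    have "P = sc (inverse c0) * (sc c0 * P)" using sc_inv[OF c0] by simp
    also have "\<dots> = sc (inverse c0) * (sc d * Qs n)" using e1 e2 by simp
    finally show ?thesis by (simp add: scsc)
  qed
  have "P * t j = sc (inverse c0 * d) * (Qs n * t j)" by (subst Pe) (simp add: mult.assoc)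
  also have "\<dots> = sc (inverse c0 * d) * (sc q * Qs n)" using Qinv[of n j] j by simp
  also have "\<dots> = sc q * (sc (inverse c0 * d) * Qs n)" by (simp add: scsc mult.commute)
  also have "\<dots> = sc q * P" using Pe by simp
  finally show "P * t j = sc q * P" .
qed


definition vw :: "nat list \<Rightarrow> 'a" where "vw w = prod_list (map v w)"
lemma vw_Nil[simp]: "vw [] = 1" by (simp add: vw_def)
lemma vw_Cons[simp]: "vw (a # w) = v a * vw w" by (simp add: vw_def)
lemma vw_append[simp]: "vw (u @ w) = vw u * vw w" by (simp add: vw_def)

definition valid :: "nat list \<Rightarrow> bool" where "valid w \<longleftrightarrow> (\<forall>x\<in>set w. 1 \<le> x \<and> x \<le> n)"

lemma sc_neg: "sc (- a) * x = - (sc a * x)" by (simp add: sc_minus)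

lemma vw_move: "a \<notin> set u \<Longrightarrow> valid (a # u) \<Longrightarrow> vw u * v a = sc ((-1) ^ length u) * (v a * vw u)"
proof (induction u)
  case Nil then show ?case by simp
next
  case (Cons b u)
  have ih: "vw u * v a = sc ((-1) ^ length u) * (v a * vw u)" using Cons by (simp add: valid_def)
  have ab: "v b * v a = - (v a * v b)" using Cons.prems by (intro vanti) (auto simp: valid_def)
  have "vw (b # u) * v a = v b * (vw u * v a)" by (simp add: mult.assoc)
  also have "\<dots> = sc ((-1) ^ length u) * ((v b * v a) * vw u)" unfolding ih xsc by (simp add: mult.assoc)
  also have "\<dots> = sc ((-1) ^ length (b # u)) * (v a * vw (b # u))"
    unfolding ab by (simp add: sc_neg mult.assoc)
  finally show ?case .
qed

lemma vw_pull: "a \<notin> set u \<Longrightarrow> valid (a # u) \<Longrightarrow> vw (u @ a # r) = sc ((-1) ^ length u) * (v a * vw (u @ r))"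
proof -
  assume a: "a \<notin> set u" "valid (a # u)"
  have "vw (u @ a # r) = (vw u * v a) * vw r" by (simp add: mult.assoc)
  also have "\<dots> = sc ((-1) ^ length u) * (v a * vw (u @ r))" unfolding vw_move[OF a] by (simp add: mult.assoc)
  finally show ?thesis .
qed

lemma t_relabel: "valid w \<Longrightarrow> Suc j \<notin> set w \<Longrightarrow> 1 \<le> j \<Longrightarrow> j < n \<Longrightarrow>
  t j * vw w = vw (map (\<lambda>x. if x = j then Suc j else x) w) * t j"
proof (induction w)
  case Nil then show ?case by simp
next
  case (Cons a w)
  have ih: "t j * vw w = vw (map (\<lambda>x. if x = j then Suc j else x) w) * t j" using Cons by (simp add: valid_def)
  have ta: "t j * v a = v (if a = j then Suc j else a) * t j"
  proof (cases "a = j")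
    case True then show ?thesis using tv1[of j] Cons.prems by simp
  next
    case False then show ?thesis using tv3[of j a] Cons.prems by (simp add: valid_def)
  qed
  have "t j * vw (a # w) = (t j * v a) * vw w" by (simp add: mult.assoc)
  also have "\<dots> = v (if a = j then Suc j else a) * (t j * vw w)" unfolding ta by (simp add: mult.assoc)
  also have "\<dots> = vw (map (\<lambda>x. if x = j then Suc j else x) (a # w)) * t j" unfolding ih by (simp add: mult.assoc)
  finally show ?case .
qed

lemma t_comm_vw: "valid w \<Longrightarrow> Suc j \<notin> set w \<Longrightarrow> j \<notin> set w \<Longrightarrow> 1 \<le> j \<Longrightarrow> j < n \<Longrightarrow>
  t j * vw w = vw w * t j"
proof -
  assume a: "valid w" "Suc j \<notin> set w" "j \<notin> set w" "1 \<le> j" "j < n"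
  have "map (\<lambda>x. if x = j then Suc j else x) w = w" using a(3) by (induction w) auto
  then show ?thesis using t_relabel[OF a(1,2,4,5)] by simp
qed

lemma tvv: "1 \<le> j \<Longrightarrow> j < n \<Longrightarrow> t j * (v j * v (Suc j)) =
   - (v j * v (Suc j) * t j) + sc \<delta> * (v j * v (Suc j)) + sc \<delta>"
proof -
  assume j: "1 \<le> j" "j < n"
  have anti: "v (Suc j) * v j = - (v j * v (Suc j))" using j by (intro vanti) auto
  have sq: "v (Suc j) * v (Suc j) = 1" using j by (intro vsq) auto
  have "t j * (v j * v (Suc j)) = v (Suc j) * (t j * v (Suc j))" using tv1[OF j] by (simp add: mult.assoc[symmetric])
  also have "\<dots> = v (Suc j) * (v j * t j - sc \<delta> * (v j - v (Suc j)))" using tv2[OF j] by simp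
  also have "\<dots> = (v (Suc j) * v j) * t j - sc \<delta> * (v (Suc j) * v j) + sc \<delta> * (v (Suc j) * v (Suc j))"
    by (simp add: right_diff_distrib xsc mult.assoc)
  also have "\<dots> = - (v j * v (Suc j) * t j) + sc \<delta> * (v j * v (Suc j)) + sc \<delta>"
    unfolding anti sq by simp
  finally show ?thesis .
qed

lemma qq_nz: "2 \<le> n \<Longrightarrow> q + inverse q \<noteq> 0"
proof
  assume n2: "2 \<le> n" and h: "q + inverse q = 0"
  have "q * (q + inverse q) = q * q + 1" using q0 by (simp add: distrib_left)
  then have "q * q + 1 = 0" using h by simp
  then have "q * q = -1" by (simp add: eq_neg_iff_add_eq_0)
  have "q ^ (2 * 2) = (q * q) * (q * q)" by (simp only: power_mult power2_eq_square)
  then have "q ^ (2 * 2) = 1" using \<open>q * q = -1\<close> by simp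
  with qroot n2 show False by auto
qed

end

locale hclP = hcl sc q n t v for sc :: "complex \<Rightarrow> 'a::ring_1" and q n t v +
  fixes P :: 'a
  assumes Pl: "\<forall>j. 1 \<le> j \<and> j < n \<longrightarrow> t j * P = sc q * P"
    and Pr: "\<forall>j. 1 \<le> j \<and> j < n \<longrightarrow> P * t j = sc q * P"
    and Pid: "P * P = P"
begin

definition X :: "nat list \<Rightarrow> 'a" where "X w = P * vw w * P"
definition inCP :: "'a \<Rightarrow> bool" where "inCP y \<longleftrightarrow> (\<exists>c. y = sc c * P)"

lemma sc_cancel: "c \<noteq> 0 \<Longrightarrow> sc c * x = sc c * y \<Longrightarrow> x = y"
  by (metis sc_inv)

lemma X_relabel: "valid w \<Longrightarrow> Suc j \<notin> set w \<Longrightarrow> 1 \<le> j \<Longrightarrow> j < n \<Longrightarrow>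
  X w = X (map (\<lambda>x. if x = j then Suc j else x) w)"
proof -
  assume a: "valid w" "Suc j \<notin> set w" "1 \<le> j" "j < n"
  define w' where "w' = map (\<lambda>x. if x = j then Suc j else x) w"
  have tl: "P * t j = sc q * P" and tr: "t j * P = sc q * P" using Pl Pr a by auto
  have "sc q * X w = (sc q * P) * vw w * P" unfolding X_def by (simp add: mult.assoc)
  also have "\<dots> = P * (t j * vw w) * P" unfolding tl[symmetric] by (simp add: mult.assoc)
  also have "\<dots> = (P * vw w') * (t j * P)" unfolding t_relabel[OF a] w'_def by (simp add: mult.assoc)
  also have "\<dots> = sc q * X w'" unfolding tr xsc X_def by (simp add: mult.assoc)
  finally show ?thesis unfolding w'_def using sc_cancel[OF q0] by blast
qed

lemma X_pair: "valid r \<Longrightarrow> Suc j \<notin> set r \<Longrightarrow> j \<notin> set r \<Longrightarrow> 1 \<le> j \<Longrightarrow> j < n \<Longrightarrow>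
  X (j # Suc j # r) = sc (\<delta> * inverse (q + inverse q)) * X r"
proof -
  assume a: "valid r" "Suc j \<notin> set r" "j \<notin> set r" "1 \<le> j" "j < n"
  define A where "A = v j * v (Suc j)"
  define B where "B = vw r"
  define Y where "Y = P * A * B * P"
  define Z where "Z = P * B * P"
  have YX: "X (j # Suc j # r) = Y" unfolding X_def Y_def A_def B_def by (simp add: mult.assoc)
  have ZX: "X r = Z" unfolding X_def Z_def B_def by simp
  have tl: "P * t j = sc q * P" and tr: "t j * P = sc q * P" using Pl Pr a by auto
  have tB: "t j * B = B * t j" unfolding B_def using t_comm_vw a by blast
  have tA: "t j * A = - (A * t j) + sc \<delta> * A + sc \<delta>" unfolding A_def using tvv a by blast
  have "sc q * Y = (sc q * P) * A * B * P" unfolding Y_def by (simp add: mult.assoc)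
  also have "\<dots> = P * (t j * A) * B * P" unfolding tl[symmetric] by (simp add: mult.assoc)
  also have "\<dots> = - (P * A * (t j * B) * P) + sc \<delta> * Y + sc \<delta> * Z"
    unfolding tA Y_def Z_def by (simp add: distrib_left distrib_right left_diff_distrib right_diff_distrib xsc mult.assoc)
  also have "P * A * (t j * B) * P = sc q * Y"
    unfolding tB Y_def by (simp add: mult.assoc tr xsc)
  finally have E: "sc q * Y = - (sc q * Y) + sc \<delta> * Y + sc \<delta> * Z" .
  have D: "sc \<delta> * Y = sc q * Y - sc (inverse q) * Y" by (simp add: sc_diff left_diff_distrib)
  have "sc q * Y + sc (inverse q) * Y = sc \<delta> * Z" using E unfolding D by (simp add: algebra_simps)
  then have F: "sc (q + inverse q) * Y = sc \<delta> * Z" by (simp add: sc_addx)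
  have n2: "2 \<le> n" using a by simp
  have "Y = sc (inverse (q + inverse q)) * (sc (q + inverse q) * Y)" using sc_inv[OF qq_nz[OF n2]] by simp
  also have "\<dots> = sc (\<delta> * inverse (q + inverse q)) * Z" unfolding F by (simp add: scsc mult.commute)
  finally show ?thesis using YX ZX by simp
qed


lemma inCP_sc: "inCP y \<Longrightarrow> inCP (sc c * y)"
  unfolding inCP_def by (auto simp: scsc)

lemma X_sc: "P * (sc c * y) * P = sc c * (P * y * P)"
  by (simp add: xsc mult.assoc)

lemma X_dup: "valid (xs @ a # ys @ a # zs) \<Longrightarrow> a \<notin> set ys \<Longrightarrow>
   X (xs @ a # ys @ a # zs) = sc ((-1) ^ length ys) * X (xs @ ys @ zs)"
proof -
  assume a: "valid (xs @ a # ys @ a # zs)" "a \<notin> set ys"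
  define s :: complex where "s = (-1) ^ length ys"
  have va: "valid (a # ys)" using a(1) by (auto simp: valid_def)
  have aa: "v a * v a = 1" using a(1) by (intro vsq) (auto simp: valid_def)
  have "vw (xs @ a # ys @ a # zs) = vw xs * (v a * ((vw ys * v a) * vw zs))" by (simp add: mult.assoc)
  also have "\<dots> = vw xs * (v a * ((sc s * (v a * vw ys)) * vw zs))"
    unfolding s_def using vw_move[OF a(2) va] by simp
  also have "\<dots> = sc s * (vw xs * ((v a * v a) * (vw ys * vw zs)))" by (simp add: xsc mult.assoc)
  also have "\<dots> = sc s * vw (xs @ ys @ zs)" unfolding aa by simp
  finally show ?thesis unfolding X_def s_def by (simp add: X_sc)
qed

lemma X_distinct:
  assumes IH: "\<And>w'. length w' < m \<Longrightarrow> valid w' \<Longrightarrow> even (length w') \<Longrightarrow> inCP (X w')"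
  shows "distinct w \<Longrightarrow> valid w \<Longrightarrow> even (length w) \<Longrightarrow> length w = m \<Longrightarrow> inCP (X w)"
proof (induction "sum_list w" arbitrary: w rule: less_induct)
  case less
  show ?case
  proof (cases "\<exists>l\<in>set w. 2 \<le> l \<and> l - 1 \<notin> set w")
    case True
    then obtain l where l: "l \<in> set w" "2 \<le> l" "l - 1 \<notin> set w" by blast
    obtain u r where w: "w = u @ l # r" using split_list[OF l(1)] by blast
    have lu: "l \<notin> set u" "l \<notin> set r" using less.prems(1) w by auto
    define j where "j = l - 1"
    have jl: "Suc j = l" "1 \<le> j" "j < n" using l(2) less.prems(2) l(1) unfolding j_def valid_def by auto
    have ju: "j \<notin> set u" "j \<notin> set r" using l(3) w j_def by auto
    define w' where "w' = u @ j # r"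
    have mu: "map (\<lambda>x. if x = j then Suc j else x) u = u" using ju by (intro map_idI) auto
    have mr: "map (\<lambda>x. if x = j then Suc j else x) r = r" using ju by (intro map_idI) auto
    have mw: "map (\<lambda>x. if x = j then Suc j else x) w' = w" unfolding w'_def w using mu mr jl by simp
    have vw': "valid w'" using less.prems(2) jl unfolding w'_def w valid_def by auto
    have sj: "Suc j \<notin> set w'" unfolding w'_def using lu jl by auto
    have Xe: "X w = X w'" using X_relabel[OF vw' sj jl(2,3)] mw by simp
    have sum: "sum_list w' < sum_list w" unfolding w'_def w using jl by simp
    have dw': "distinct w'" using less.prems(1) ju unfolding w'_def w by auto
    have "inCP (X w')" using less.hyps[OF sum dw' vw'] less.prems(3,4) unfolding w'_def w by simp
    then show ?thesis using Xe by simp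
  next
    case False
    then have cl: "\<forall>l\<in>set w. 2 \<le> l \<longrightarrow> l - 1 \<in> set w" by auto
    show ?thesis
    proof (cases "w = []")
      case True
      then have "X w = sc 1 * P" unfolding X_def by (simp add: Pid)
      then show ?thesis unfolding inCP_def by blast
    next
      case False
      have val: "\<And>x. x \<in> set w \<Longrightarrow> 1 \<le> x \<and> x \<le> n" using less.prems(2) unfolding valid_def by auto
      have "length w \<noteq> 0" using False by simp
      then have len: "2 \<le> length w" using less.prems(3) by presburger
      have one: "1 \<in> set w"
      proof -
        define m0 where "m0 = Min (set w)"
        have m0: "m0 \<in> set w" unfolding m0_def using False by (intro Min_in) auto
        have "m0 = 1"
        proof (rule ccontr)
          assume "m0 \<noteq> 1"
          then have "2 \<le> m0" using val[OF m0] by simp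
          then have "m0 - 1 \<in> set w" using cl[rule_format, OF m0] by simp
          then have "m0 \<le> m0 - 1" unfolding m0_def by (rule Min_le[OF finite_set])
          then show False using \<open>2 \<le> m0\<close> by simp
        qed
        then show ?thesis using m0 by simp
      qed
      have two: "2 \<in> set w"
      proof -
        define S where "S = set w - {1}"
        have "card (set w) = length w" using less.prems(1) by (simp add: distinct_card)
        then have "set w \<noteq> {1}" using len by (intro notI) simp
        then have Sne: "S \<noteq> {}" unfolding S_def using one by auto
        define m1 where "m1 = Min S"
        have fS: "finite S" unfolding S_def by simp
        have m1: "m1 \<in> S" unfolding m1_def using Sne fS by (intro Min_in) auto
        have m1w: "m1 \<in> set w" "m1 \<noteq> 1" using m1 unfolding S_def by auto
        have m12: "2 \<le> m1" using val[OF m1w(1)] m1w(2) by simp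
        have "m1 = 2"
        proof (rule ccontr)
          assume "m1 \<noteq> 2"
          have "m1 \<in> set w" using m1 unfolding S_def by simp
          then have "m1 - 1 \<in> set w" using cl[rule_format, OF _ m12] by simp
          then have "m1 - 1 \<in> S" using \<open>m1 \<noteq> 2\<close> m12 unfolding S_def by simp
          then have "m1 \<le> m1 - 1" unfolding m1_def by (rule Min_le[OF fS])
          then show False using m12 by simp
        qed
        then show ?thesis using m1 S_def by simp
      qed
      obtain u1 r1 where w1: "w = u1 @ 1 # r1" "1 \<notin> set u1" using split_list_first[OF one] by blast
      have two': "2 \<in> set (u1 @ r1)" using two w1 by auto
      obtain u2 r2 where w2: "u1 @ r1 = u2 @ 2 # r2" "2 \<notin> set u2" using split_list_first[OF two'] by blast
      define r where "r = u2 @ r2"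
      have d1: "distinct (u1 @ r1)" "1 \<notin> set r1" using less.prems(1) w1 by auto
      have d2: "2 \<notin> set r2" using d1(1) w2 by (metis distinct_append distinct.simps(2) not_distinct_conv_prefix)
      have setr: "set r \<subseteq> set (u1 @ r1)" unfolding r_def using w2 by auto
      have r1: "1 \<notin> set r" using setr d1 w1 by auto
      have r2: "2 \<notin> set r" unfolding r_def using w2 d2 by auto
      have vr: "valid r" using setr less.prems(2) w1 unfolding valid_def by auto
      have n2: "1 < n" using val[OF two] by simp
      have va1: "valid (1 # u1)" using less.prems(2) w1 unfolding valid_def by auto
      have s2: "set (2 # u2) \<subseteq> set (u1 @ r1)" unfolding w2 by auto
      have s1: "set (u1 @ r1) \<subseteq> set w" unfolding w1(1) by auto
      have va2: "valid (2 # u2)" using less.prems(2) s1 s2 unfolding valid_def by blast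
      define s1 :: complex where "s1 = (-1) ^ length u1"
      define s2 :: complex where "s2 = (-1) ^ length u2"
      have e1: "vw w = sc s1 * (v 1 * vw (u1 @ r1))" unfolding w1 s1_def by (rule vw_pull[OF w1(2) va1])
      have e2: "vw (u1 @ r1) = sc s2 * (v 2 * vw r)" unfolding w2 r_def s2_def by (rule vw_pull[OF w2(2) va2])
      have "vw w = sc s1 * (v 1 * (sc s2 * (v 2 * vw r)))" unfolding e1 e2 ..
      also have "\<dots> = sc s1 * (sc s2 * (v 1 * (v 2 * vw r)))" by (simp only: xsc[of "v 1" s2])
      also have "\<dots> = sc (s1 * s2) * vw (1 # Suc 1 # r)" by (simp only: scsc) (simp add: numeral_2_eq_2)
      finally have "vw w = sc (s1 * s2) * vw (1 # Suc 1 # r)" .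
      then have Xw: "X w = sc (s1 * s2) * X (1 # Suc 1 # r)" unfolding X_def by (simp add: X_sc)
      have l1: "length (u1 @ r1) = length r + 1" unfolding r_def w2 by simp
      have l2: "length w = length (u1 @ r1) + 1" unfolding w1 by simp
      have lr: "length r < m" using l1 l2 less.prems(4) by simp
      have er: "even (length r)" using l1 l2 less.prems(3) by simp
      have "inCP (X r)" using IH[OF lr vr er] .
      moreover have "Suc 1 \<notin> set r" using r2 by (simp add: numeral_2_eq_2)
      ultimately have "inCP (X (1 # Suc 1 # r))" using X_pair[OF vr _ r1 _ n2] by (simp add: inCP_sc)
      then show ?thesis using Xw by (simp add: inCP_sc)
    qed
  qed
qed


lemma dup_decomp: "\<not> distinct w \<Longrightarrow> \<exists>xs a ys zs. w = xs @ a # ys @ a # zs \<and> a \<notin> set ys"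
proof (induction w)
  case Nil then show ?case by simp
next
  case (Cons b w)
  show ?case
  proof (cases "distinct w")
    case True
    then have "b \<in> set w" using Cons.prems by simp
    then obtain ys zs where "w = ys @ b # zs" "b \<notin> set ys" using split_list_first by metis
    then have "b # w = [] @ b # ys @ b # zs" by simp
    then show ?thesis using \<open>b \<notin> set ys\<close> by blast
  next
    case False
    then obtain xs a ys zs where "w = xs @ a # ys @ a # zs" "a \<notin> set ys" using Cons.IH by blast
    then have "b # w = (b # xs) @ a # ys @ a # zs" by simp
    then show ?thesis using \<open>a \<notin> set ys\<close> by blast
  qed
qed

lemma X_CP: "valid w \<Longrightarrow> even (length w) \<Longrightarrow> inCP (X w)"
proof (induction "length w" arbitrary: w rule: less_induct)
  case less
  show ?case
  proof (cases "distinct w")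
    case False
    then obtain xs a ys zs where w: "w = xs @ a # ys @ a # zs" "a \<notin> set ys" using dup_decomp by blast
    have "X w = sc ((-1) ^ length ys) * X (xs @ ys @ zs)" using X_dup less.prems(1) w by simp
    moreover have "inCP (X (xs @ ys @ zs))"
      using less.hyps less.prems unfolding w(1) by (simp add: valid_def)
    ultimately show ?thesis by (simp add: inCP_sc)
  next
    case True
    then show ?thesis using X_distinct[of "length w" w] less by blast
  qed
qed

inductive_set LS :: "bool \<Rightarrow> 'a set" for e :: bool where
  ls_base: "valid w \<Longrightarrow> even (length w) = e \<Longrightarrow> vw w * P \<in> LS e"
| ls_sc: "x \<in> LS e \<Longrightarrow> sc c * x \<in> LS e"
| ls_add: "x \<in> LS e \<Longrightarrow> y \<in> LS e \<Longrightarrow> x + y \<in> LS e"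

lemma v_LS: "x \<in> LS e \<Longrightarrow> 1 \<le> a \<Longrightarrow> a \<le> n \<Longrightarrow> v a * x \<in> LS (\<not> e)"
proof (induction rule: LS.induct)
  case (ls_base w)
  have "v a * (vw w * P) = vw (a # w) * P" by (simp add: mult.assoc)
  moreover have "vw (a # w) * P \<in> LS (\<not> e)" using ls_base by (intro LS.ls_base) (auto simp: valid_def)
  ultimately show ?case by simp
next
  case (ls_sc x c)
  then show ?case by (simp add: xsc LS.ls_sc)
next
  case (ls_add x y)
  then show ?case by (simp add: distrib_left LS.ls_add)
qed

lemma t_vw_LS: "1 \<le> j \<Longrightarrow> j < n \<Longrightarrow> valid w \<Longrightarrow> t j * (vw w * P) \<in> LS (even (length w))"
proof (induction w)
  case Nil
  have "t j * (vw [] * P) = sc q * (vw [] * P)" using Nil Pl by simp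
  moreover have "vw [] * P \<in> LS True" by (rule LS.ls_base) (auto simp: valid_def)
  ultimately show ?case by (simp add: LS.ls_sc)
next
  case (Cons a w)
  have vw: "valid w" and a: "1 \<le> a" "a \<le> n" using Cons.prems by (auto simp: valid_def)
  have IH: "t j * (vw w * P) \<in> LS (even (length w))" using Cons.IH Cons.prems vw by simp
  have e: "even (length (a # w)) = (\<not> even (length w))" by simp
  have expand: "t j * (vw (a # w) * P) = (t j * v a) * (vw w * P)" by (simp add: mult.assoc)
  show ?case
  proof (cases "a = j")
    case True
    then have "t j * (vw (a # w) * P) = v (Suc j) * (t j * (vw w * P))"
      unfolding expand using tv1 Cons.prems by (simp add: mult.assoc)
    moreover have "v (Suc j) * (t j * (vw w * P)) \<in> LS (even (length (a # w)))"
      unfolding e using v_LS[OF IH] Cons.prems by simp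
    ultimately show ?thesis by simp
  next
    case False
    note aj = False
    show ?thesis
    proof (cases "a = Suc j")
      case True
      have "t j * (vw (a # w) * P) = (t j * v (Suc j)) * (vw w * P)" using expand True by simp
      also have "\<dots> = (v j * t j - sc \<delta> * (v j - v (Suc j))) * (vw w * P)"
        using tv2[OF Cons.prems(1,2)] by (simp only: Suc_eq_plus1)
      also have "\<dots> = v j * (t j * (vw w * P)) + (- (sc \<delta> * (vw (j # w) * P)) + sc \<delta> * (vw (Suc j # w) * P))"
        by (simp add: algebra_simps)
      finally have eq: "t j * (vw (a # w) * P) = v j * (t j * (vw w * P)) + (- (sc \<delta> * (vw (j # w) * P)) + sc \<delta> * (vw (Suc j # w) * P))" .
      moreover have "v j * (t j * (vw w * P)) \<in> LS (even (length (a # w)))"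
        unfolding e using v_LS[OF IH] Cons.prems by simp
      moreover have "vw (j # w) * P \<in> LS (even (length (a # w)))"
        by (rule LS.ls_base) (use vw Cons.prems in \<open>auto simp: valid_def\<close>)
      moreover have "vw (Suc j # w) * P \<in> LS (even (length (a # w)))"
        by (rule LS.ls_base) (use vw Cons.prems in \<open>auto simp: valid_def\<close>)
      ultimately show ?thesis unfolding eq sc_neg[symmetric] by (intro LS.ls_add LS.ls_sc)
    next
      case False
      have "t j * v a = v a * t j" using tv3[OF Cons.prems(1,2) a] aj False by simp
      then have "t j * (vw (a # w) * P) = v a * (t j * (vw w * P))"
        unfolding expand by (simp add: mult.assoc)
      moreover have "v a * (t j * (vw w * P)) \<in> LS (even (length (a # w)))"
        unfolding e using v_LS[OF IH a] by simp
      ultimately show ?thesis by simp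
    qed
  qed
qed

lemma t_LS: "x \<in> LS e \<Longrightarrow> 1 \<le> j \<Longrightarrow> j < n \<Longrightarrow> t j * x \<in> LS e"
proof (induction rule: LS.induct)
  case (ls_base w) then show ?case using t_vw_LS by blast
next
  case (ls_sc x c) then show ?case by (simp add: xsc LS.ls_sc)
next
  case (ls_add x y) then show ?case by (simp add: distrib_left LS.ls_add)
qed

lemma even_LS: "x \<in> even_part sc n t v \<Longrightarrow> y \<in> LS e \<Longrightarrow> x * y \<in> LS e"
proof (induction x arbitrary: y e rule: even_part.induct)
  case (ep_scal c) then show ?case by (simp add: LS.ls_sc)
next
  case (ep_t j) then show ?case by (simp add: t_LS)
next
  case (ep_vv j k)
  have "v k * y \<in> LS (\<not> e)" using v_LS ep_vv by blast
  then have "v j * (v k * y) \<in> LS (\<not> \<not> e)" using v_LS ep_vv by blast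
  then show ?case by (simp add: mult.assoc)
next
  case (ep_add x1 x2) then show ?case by (simp add: distrib_right LS.ls_add)
next
  case (ep_mult x1 x2) then show ?case by (simp add: mult.assoc)
qed

lemma P_LS: "y \<in> LS e \<Longrightarrow> e \<Longrightarrow> inCP (P * y)"
proof (induction rule: LS.induct)
  case (ls_base w)
  then have "inCP (X w)" using X_CP by simp
  then show ?case unfolding X_def by (simp add: mult.assoc)
next
  case (ls_sc x c)
  then show ?case by (simp add: xsc inCP_sc)
next
  case (ls_add x y)
  then obtain a b where "P * x = sc a * P" "P * y = sc b * P" unfolding inCP_def by blast
  then have "P * (x + y) = sc (a + b) * P" by (simp add: distrib_left sc_addx)
  then show ?case unfolding inCP_def by blast
qed

lemma main: "x \<in> even_part sc n t v \<Longrightarrow> \<exists>c. P * x * P = sc c * P"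
proof -
  assume x: "x \<in> even_part sc n t v"
  have "vw [] * P \<in> LS True" by (rule LS.ls_base) (auto simp: valid_def)
  then have "P \<in> LS True" by simp
  then have "x * P \<in> LS True" using even_LS[OF x] by blast
  then have "inCP (P * (x * P))" using P_LS by blast
  then show ?thesis unfolding inCP_def by (simp add: mult.assoc)
qed

end

theorem lemma2p17:
  fixes sc :: "complex \<Rightarrow> 'a::ring_1" and q :: complex and n :: nat
    and t v :: "nat \<Rightarrow> 'a" and p1 p2 :: 'a
  assumes alg: "cplx_alg sc"
    and rels: "hc_rels sc q n t v"
    and q0: "q \<noteq> 0"
    and qroot: "\<forall>j. 2 \<le> j \<and> j \<le> n \<longrightarrow> q ^ (2 * j) \<noteq> 1"
    and p1H: "p1 \<in> hecke_part sc n t" and p1idem: "p1 * p1 = p1"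
    and p1t: "\<forall>j. 1 \<le> j \<and> j < n \<longrightarrow> t j * p1 = sc q * p1"
    and p2H: "p2 \<in> hecke_part sc n t" and p2idem: "p2 * p2 = p2"
    and p2t: "\<forall>j. 1 \<le> j \<and> j < n \<longrightarrow> t j * p2 = sc (- inverse q) * p2"
  shows "(\<forall>x \<in> even_part sc n t v. \<exists>c. p1 * x * p1 = sc c * p1) \<and>
         (\<forall>x \<in> even_part sc n t v. \<exists>c. p2 * x * p2 = sc c * p2)"
proof
  have H1: "hcl sc q n t v" unfolding hcl_def using alg rels q0 qroot by blast
  have I1: "hclP sc q n t v p1"
    unfolding hclP_def hclP_axioms_def using H1 p1t hcl.P_right[OF H1 p1H p1t] p1idem by blast
  show "\<forall>x \<in> even_part sc n t v. \<exists>c. p1 * x * p1 = sc c * p1"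
    using hclP.main[OF I1] by blast
next
  define q' where "q' = - inverse q"
  have eqd: "q' - inverse q' = q - inverse q" unfolding q'_def by simp
  have rels2: "hc_rels sc q' n t v" using rels unfolding hc_rels_def eqd .
  have q0': "q' \<noteq> 0" unfolding q'_def using q0 by simp
  have qroot': "\<forall>j. 2 \<le> j \<and> j \<le> n \<longrightarrow> q' ^ (2 * j) \<noteq> 1"
  proof (intro allI impI)
    fix j assume j: "2 \<le> j \<and> j \<le> n"
    have "q' ^ (2 * j) = inverse (q ^ (2 * j))" unfolding q'_def
      by (simp add: power_mult power_inverse)
    then show "q' ^ (2 * j) \<noteq> 1" using qroot j by simp
  qed
  have H2: "hcl sc q' n t v" unfolding hcl_def using alg rels2 q0' qroot' by blast
  have p2t': "\<forall>j. 1 \<le> j \<and> j < n \<longrightarrow> t j * p2 = sc q' * p2" using p2t unfolding q'_def .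
  have I2: "hclP sc q' n t v p2"
    unfolding hclP_def hclP_axioms_def using H2 p2t' hcl.P_right[OF H2 p2H p2t'] p2idem by blast
  show "\<forall>x \<in> even_part sc n t v. \<exists>c. p2 * x * p2 = sc c * p2"
    using hclP.main[OF I2] by blast
qed

end
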